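(* Let $n=n(\theta)$ be positive integers with $n\to\infty$ and $\theta/n\to0$ as $\theta\to\infty$. Let $K_n(\theta)$ be a random variable with $P\{K_n(\theta)=k\}=|S_n^k|\theta^k/\theta_{(n)}$, $k=1,\dots,n$, where $\theta_{(n)}=\theta(\theta+1)\cdots(\theta+n-1)$ and $|S_n^k|$ is the coefficient of $\theta^k$ in $\theta_{(n)}$. Then, as $\theta\to\infty$, the family of laws of $K_n(\theta)/(\theta\log\frac n\theta)$ satisfies an LDP on $[0,+\infty)$ with speed $\theta\log\frac n\theta$ and rate function $I(x)=x\log x-x+1$ (with $0\log0=0$).
   Context: $K_n(\theta)$ is the number of distinct alleles in a sample of size $n$ from a $PD(\theta)$ population. An LDP with speed $a(\theta)$ uses normalization $a(\theta)^{-1}\log$ as $\theta\to\infty$. *)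

theory Defs
  imports "HOL-Analysis.Analysis" "HOL-Combinatorics.Stirling"
begin

text \<open>Law of K_n(theta): P(K = k) = |S_n^k| theta^k / theta_(n), k = 1..n,
  where |S_n^k| = stirling n k (unsigned Stirling numbers of the first kind,
  the coefficient of theta^k in the rising factorial pochhammer theta n).\<close>
definition Kprob :: "real \<Rightarrow> nat \<Rightarrow> nat \<Rightarrow> real" where
  "Kprob \<theta> n k = real (stirling n k) * \<theta> ^ k / pochhammer \<theta> n"

definition Kscaled_prob :: "real \<Rightarrow> nat \<Rightarrow> real \<Rightarrow> real set \<Rightarrow> real" where
  "Kscaled_prob \<theta> n c A = (\<Sum>k\<in>{k\<in>{1..n}. real k / c \<in> A}. Kprob \<theta> n k)"

definition nlog :: "real \<Rightarrow> real \<Rightarrow> ereal" where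
  "nlog a p = (if p \<le> 0 then - \<infinity> else ereal (ln p / a))"

definition LDP_at_top ::
  "(real \<Rightarrow> real set \<Rightarrow> real) \<Rightarrow> (real \<Rightarrow> real) \<Rightarrow> (real \<Rightarrow> real) \<Rightarrow> real set \<Rightarrow> bool" where
  "LDP_at_top P a I E \<longleftrightarrow>
     (\<forall>x\<in>E. 0 \<le> I x) \<and>
     (\<forall>c. closedin (top_of_set E) {x\<in>E. I x \<le> c}) \<and>
     (\<forall>F. closedin (top_of_set E) F \<longrightarrow>
        Limsup at_top (\<lambda>\<theta>. nlog (a \<theta>) (P \<theta> F)) \<le> - (INF x\<in>F. ereal (I x))) \<and>
     (\<forall>G. openin (top_of_set E) G \<longrightarrow>
        - (INF x\<in>G. ereal (I x)) \<le> Liminf at_top (\<lambda>\<theta>. nlog (a \<theta>) (P \<theta> G)))"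

definition rateI :: "real \<Rightarrow> real" where
  "rateI x = (if x = 0 then 1 else x * ln x - x + 1)"

end

theory Submission
  imports Defs "HOL-Real_Asymp.Real_Asymp"
begin


definition SS :: "real \<Rightarrow> nat \<Rightarrow> real" where "SS \<theta> n = (\<Sum>i<n. \<theta> / (\<theta> + real i))"
definition QQ :: "real \<Rightarrow> nat \<Rightarrow> real" where "QQ \<theta> n = (\<Sum>i<n. (\<theta> / (\<theta> + real i))^2)"

lemma poch_pos: "\<theta> > 0 \<Longrightarrow> pochhammer \<theta> n > (0::real)"
  by (simp add: pochhammer_pos)

lemma stirling_sum1:
  assumes "n > 0" shows "(\<Sum>k\<in>{1..n}. real (stirling n k) * y^k) = pochhammer (y::real) n"
proof -
  have "{..n} = insert 0 {1..n}" by auto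
  then have "(\<Sum>k\<le>n. real (stirling n k) * y^k) = (\<Sum>k\<in>{1..n}. real (stirling n k) * y^k)"
    using assms by simp
  then show ?thesis using stirling_pochhammer[of n y] by simp
qed

lemma Kprob_nonneg: "\<theta> > 0 \<Longrightarrow> Kprob \<theta> n k \<ge> 0"
  unfolding Kprob_def using poch_pos[of \<theta> n] by simp

lemma Kprob_sum1: assumes "\<theta> > 0" "n > 0" shows "(\<Sum>k\<in>{1..n}. Kprob \<theta> n k) = 1"
proof -
  have "(\<Sum>k\<in>{1..n}. Kprob \<theta> n k) = (\<Sum>k\<in>{1..n}. real (stirling n k) * \<theta>^k) / pochhammer \<theta> n"
    unfolding Kprob_def by (simp add: sum_divide_distrib)
  also have "\<dots> = 1" using stirling_sum1[OF assms(2)] poch_pos[OF assms(1), of n] by (simp del: of_nat_power)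
  finally show ?thesis .
qed

lemma Kscaled_nonneg: "\<theta> > 0 \<Longrightarrow> Kscaled_prob \<theta> n c A \<ge> 0"
  unfolding Kscaled_prob_def by (intro sum_nonneg Kprob_nonneg)

lemma Kscaled_mono: assumes "\<theta> > 0" "A \<subseteq> B" shows "Kscaled_prob \<theta> n c A \<le> Kscaled_prob \<theta> n c B"
  unfolding Kscaled_prob_def
  by (rule sum_mono2) (use assms Kprob_nonneg in auto)

lemma Kscaled_UNIV: assumes "\<theta> > 0" "n > 0" shows "Kscaled_prob \<theta> n c UNIV = 1"
proof -
  have "{k\<in>{1..n}. real k / c \<in> UNIV} = {1..n}" by auto
  then show ?thesis unfolding Kscaled_prob_def using Kprob_sum1[OF assms] by simp
qed

lemma Kscaled_le1: assumes "\<theta> > 0" "n > 0" shows "Kscaled_prob \<theta> n c A \<le> 1"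
  using Kscaled_mono[OF assms(1), of A UNIV n c] Kscaled_UNIV[OF assms] by simp

lemma Kscaled_Un: assumes "\<theta> > 0"
  shows "Kscaled_prob \<theta> n c (A \<union> B) \<le> Kscaled_prob \<theta> n c A + Kscaled_prob \<theta> n c B"
proof -
  have e: "{k\<in>{1..n}. real k / c \<in> A \<union> B} = {k\<in>{1..n}. real k / c \<in> A} \<union> {k\<in>{1..n}. real k / c \<in> B}"
    by auto
  show ?thesis unfolding Kscaled_prob_def e
    using sum_Un[of "{k\<in>{1..n}. real k / c \<in> A}" "{k\<in>{1..n}. real k / c \<in> B}" "Kprob \<theta> n"]
      sum_nonneg[of "{k\<in>{1..n}. real k / c \<in> A} \<inter> {k\<in>{1..n}. real k / c \<in> B}" "Kprob \<theta> n"]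
      Kprob_nonneg[OF assms] by simp
qed

lemma Kscaled_empty: "Kscaled_prob \<theta> n c {} = 0"
  unfolding Kscaled_prob_def by simp

lemma mgf_eq: assumes "\<theta> > 0" "n > 0"
  shows "(\<Sum>k\<in>{1..n}. Kprob \<theta> n k * c^k) = pochhammer (c*\<theta>) n / pochhammer \<theta> n"
proof -
  have "(\<Sum>k\<in>{1..n}. Kprob \<theta> n k * c^k) = (\<Sum>k\<in>{1..n}. real (stirling n k) * (c*\<theta>)^k) / pochhammer \<theta> n"
    unfolding Kprob_def sum_divide_distrib by (rule sum.cong) (auto simp: power_mult_distrib)
  also have "\<dots> = pochhammer (c*\<theta>) n / pochhammer \<theta> n" using stirling_sum1[OF assms(2)] by simp
  finally show ?thesis .
qed

lemma ratio_upper: assumes "\<theta> > 0" "c > 0"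
  shows "pochhammer (c*\<theta>) n / pochhammer \<theta> n \<le> exp ((c-1) * SS \<theta> n)"
proof -
  have "pochhammer (c*\<theta>) n / pochhammer \<theta> n = (\<Prod>i<n. (c*\<theta> + real i) / (\<theta> + real i))"
    by (simp add: pochhammer_prod lessThan_atLeast0 prod_dividef)
  also have "\<dots> \<le> (\<Prod>i<n. exp ((c-1) * (\<theta> / (\<theta> + real i))))"
  proof (rule prod_mono)
    fix i assume "i \<in> {..<n}"
    have p: "\<theta> + real i > 0" using assms by simp
    have A: "0 \<le> (c*\<theta> + real i) / (\<theta> + real i)" using assms p by simp
    have "(c*\<theta> + real i) / (\<theta> + real i) = 1 + (c-1) * (\<theta> / (\<theta> + real i))"
      using p by (simp add: field_simps)
    also have "\<dots> \<le> exp ((c-1) * (\<theta> / (\<theta> + real i)))" by (rule exp_ge_add_one_self)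
    finally show "0 \<le> (c*\<theta> + real i) / (\<theta> + real i) \<and> (c*\<theta> + real i) / (\<theta> + real i) \<le> exp ((c-1) * (\<theta> / (\<theta> + real i)))" using A by simp
  qed
  also have "\<dots> = exp ((c-1) * SS \<theta> n)"
    unfolding SS_def by (simp add: exp_sum sum_distrib_left)
  finally show ?thesis .
qed

lemma ln_lower_aux: fixes p c :: real assumes "0 < p" "p \<le> 1" "c > 0"
  shows "ln (1 + (c-1)*p) \<ge> (c-1)*p - ((c-1)^2 / min 1 c) * p^2"
proof -
  define u where "u = (c-1)*p"
  have m0: "1 + (c-1)*p \<ge> min 1 c" using assms
  proof (cases "c \<le> 1")
    case True
    have "1 + (c-1)*p = (1-p) + c*p" by (simp add: algebra_simps)
    also have "\<dots> \<ge> (1-p)*c + c*p" using True assms mult_left_mono[of c 1 "1-p"] by simp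
    finally show ?thesis using True by (simp add: algebra_simps)
  next
    case False
    then show ?thesis using assms by simp
  qed
  have m: "1 + u \<ge> min 1 c" using m0 u_def by simp
  have mp: "min 1 c > 0" using assms by simp
  have pos: "1 + u > 0" using m mp by linarith
  have "ln (1/(1+u)) \<le> 1/(1+u) - 1" using pos by (intro ln_le_minus_one) simp
  then have "ln (1+u) \<ge> u/(1+u)" using pos by (simp add: ln_div field_simps)
  moreover have "u/(1+u) = u - u^2/(1+u)" using pos by (simp add: field_simps power2_eq_square)
  moreover have "u^2/(1+u) \<le> u^2 / min 1 c" using m mp by (intro divide_left_mono) auto
  moreover have "u^2 = (c-1)^2 * p^2" unfolding u_def by (simp add: power_mult_distrib)
  ultimately show ?thesis unfolding u_def by (simp add: field_simps)
qed

lemma ratio_lower: assumes "\<theta> > 0" "c > 0"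
  shows "ln (pochhammer (c*\<theta>) n / pochhammer \<theta> n) \<ge> (c-1) * SS \<theta> n - ((c-1)^2 / min 1 c) * QQ \<theta> n"
proof -
  have pos: "\<And>i. \<theta> + real i > 0" using assms by simp
  have pos': "\<And>i. \<theta> + real i \<noteq> 0" using pos by (metis order_less_irrefl)
  have "pochhammer (c*\<theta>) n / pochhammer \<theta> n = (\<Prod>i<n. 1 + (c-1) * (\<theta> / (\<theta> + real i)))"
  proof -
    have "pochhammer (c*\<theta>) n / pochhammer \<theta> n = (\<Prod>i<n. (c*\<theta> + real i) / (\<theta> + real i))"
      by (simp add: pochhammer_prod lessThan_atLeast0 prod_dividef)
    also have "\<dots> = (\<Prod>i<n. 1 + (c-1) * (\<theta> / (\<theta> + real i)))"
      by (rule prod.cong) (use pos' in \<open>auto simp: field_simps\<close>)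
    finally show ?thesis .
  qed
  moreover have fp: "\<And>i. 1 + (c-1) * (\<theta> / (\<theta> + real i)) > 0"
  proof -
    fix i have "(c*\<theta> + real i) / (\<theta> + real i) > 0" using assms by (intro divide_pos_pos add_pos_nonneg) auto
    moreover have "(c*\<theta> + real i) / (\<theta> + real i) = 1 + (c-1) * (\<theta> / (\<theta> + real i))"
      using pos[of i] by (simp add: field_simps)
    ultimately show "1 + (c-1) * (\<theta> / (\<theta> + real i)) > 0" by simp
  qed
  moreover have "ln (\<Prod>i<n. 1 + (c-1) * (\<theta> / (\<theta> + real i))) = (\<Sum>i<n. ln (1 + (c-1) * (\<theta> / (\<theta> + real i))))"
    by (rule ln_prod, simp, metis fp less_irrefl)
  ultimately have "ln (pochhammer (c*\<theta>) n / pochhammer \<theta> n) = (\<Sum>i<n. ln (1 + (c-1) * (\<theta> / (\<theta> + real i))))"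
    by simp
  also have "\<dots> \<ge> (\<Sum>i<n. (c-1) * (\<theta> / (\<theta> + real i)) - ((c-1)^2 / min 1 c) * (\<theta> / (\<theta> + real i))^2)"
    by (intro sum_mono ln_lower_aux) (use assms pos in auto)
  moreover have "(\<Sum>i<n. (c-1) * (\<theta> / (\<theta> + real i)) - ((c-1)^2 / min 1 c) * (\<theta> / (\<theta> + real i))^2)
     = (c-1) * SS \<theta> n - ((c-1)^2 / min 1 c) * QQ \<theta> n"
    unfolding SS_def QQ_def by (simp add: sum_subtractf sum_distrib_left)
  ultimately show ?thesis by simp
qed



lemma chernoff:
  assumes th: "\<theta> > 0" and n: "n > 0" and a: "a > 0" and c: "c > 0"
    and A: "\<forall>x\<in>A. ln c * (x - z) \<ge> 0"
  shows "Kscaled_prob \<theta> n a A \<le> exp ((c-1) * SS \<theta> n - ln c * z * a)"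
proof -
  let ?K = "{k\<in>{1..n}. real k / a \<in> A}"
  have "Kscaled_prob \<theta> n a A \<le> (\<Sum>k\<in>?K. Kprob \<theta> n k * c^k * exp (- ln c * z * a))"
    unfolding Kscaled_prob_def
  proof (rule sum_mono)
    fix k assume k: "k \<in> ?K"
    have "ln c * (real k / a - z) \<ge> 0" using A k by auto
    moreover have "ln c * (real k - z * a) = a * (ln c * (real k / a - z))" using a
      by (simp add: field_simps)
    ultimately have "ln c * (real k - z * a) \<ge> 0" using a by (metis mult_nonneg_nonneg less_imp_le)
    then have "exp (ln c * (real k - z * a)) \<ge> 1" by simp
    moreover have "exp (ln c * (real k - z * a)) = c^k * exp (- ln c * z * a)"
    proof -
      have "exp (real k * ln c) = c^k" using c by (simp add: exp_of_nat_mult)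
      then show ?thesis by (simp add: exp_diff right_diff_distrib mult.commute mult.left_commute
        divide_inverse exp_minus)
    qed
    ultimately have "1 \<le> c^k * exp (- ln c * z * a)" by simp
    then show "Kprob \<theta> n k \<le> Kprob \<theta> n k * c^k * exp (- ln c * z * a)"
      using Kprob_nonneg[OF th, of n k] mult_left_mono[of 1 "c^k * exp (- ln c * z * a)" "Kprob \<theta> n k"]
      by (simp add: mult.assoc)
  qed
  also have "\<dots> \<le> (\<Sum>k\<in>{1..n}. Kprob \<theta> n k * c^k * exp (- ln c * z * a))"
    by (rule sum_mono2) (use Kprob_nonneg[OF th] c in auto)
  also have "\<dots> = (pochhammer (c*\<theta>) n / pochhammer \<theta> n) * exp (- ln c * z * a)"
    using mgf_eq[OF th n, of c] by (simp only: sum_distrib_right[symmetric])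
  also have "\<dots> \<le> exp ((c-1) * SS \<theta> n) * exp (- ln c * z * a)"
    by (intro mult_right_mono ratio_upper th c) simp
  also have "\<dots> = exp ((c-1) * SS \<theta> n - ln c * z * a)" by (simp add: exp_add[symmetric])
  finally show ?thesis .
qed

lemma tilt: assumes "\<theta> > 0" "c > 0"
  shows "Kprob \<theta> n k = Kprob (c*\<theta>) n k * (1/c)^k * (pochhammer (c*\<theta>) n / pochhammer \<theta> n)"
proof -
  have p1: "pochhammer (c*\<theta>) n > 0" using assms by (intro poch_pos) simp
  have p2: "pochhammer \<theta> n > 0" using assms by (intro poch_pos)
  show ?thesis unfolding Kprob_def using p1 p2 assms
    by (simp add: field_simps power_mult_distrib)
qed

lemma harm_lower: assumes "\<theta> > 0"
  shows "(\<Sum>i<n. 1 / (\<theta> + real i)) \<ge> ln (\<theta> + real n) - ln \<theta>"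
proof (induction n)
  case 0 then show ?case by simp
next
  case (Suc m)
  have p: "\<theta> + real m > 0" using assms by simp
  have "ln ((\<theta> + real m + 1) / (\<theta> + real m)) \<le> (\<theta> + real m + 1) / (\<theta> + real m) - 1"
    using p by (intro ln_le_minus_one) simp
  also have "\<dots> = 1 / (\<theta> + real m)" using p by (simp add: field_simps)
  finally have st: "ln (\<theta> + real m + 1) - ln (\<theta> + real m) \<le> 1 / (\<theta> + real m)"
    using p by (simp add: ln_div)
  have e: "\<theta> + real (Suc m) = \<theta> + real m + 1" by simp
  show ?case unfolding sum.lessThan_Suc e using Suc.IH st by linarith
qed

lemma harm_upper: assumes "\<theta> > 0"
  shows "(\<Sum>i<Suc m. 1 / (\<theta> + real i)) \<le> 1/\<theta> + ln (\<theta> + real m) - ln \<theta>"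
proof (induction m)
  case 0 then show ?case by simp
next
  case (Suc m)
  have p: "\<theta> + real m > 0" using assms by simp
  have "ln ((\<theta> + real m) / (\<theta> + real m + 1)) \<le> (\<theta> + real m) / (\<theta> + real m + 1) - 1"
    using p by (intro ln_le_minus_one) simp
  also have "\<dots> = - (1 / (\<theta> + real m + 1))" using p by (simp add: field_simps)
  finally have st: "1 / (\<theta> + real m + 1) \<le> ln (\<theta> + real m + 1) - ln (\<theta> + real m)"
    using p by (simp add: ln_div)
  have e: "\<theta> + real (Suc m) = \<theta> + real m + 1" by simp
  show ?case unfolding sum.lessThan_Suc[of _ "Suc m"] e using Suc.IH st by linarith
qed

lemma SS_eq: "\<theta> > 0 \<Longrightarrow> SS \<theta> n = \<theta> * (\<Sum>i<n. 1 / (\<theta> + real i))"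
  unfolding SS_def by (simp add: sum_distrib_left)

lemma ln_one_plus: assumes "\<theta> > 0" shows "ln (1 + real n / \<theta>) = ln (\<theta> + real n) - ln \<theta>"
proof -
  have "1 + real n / \<theta> = (\<theta> + real n) / \<theta>" using assms by (simp add: field_simps)
  then show ?thesis using assms by (simp add: ln_div add_pos_nonneg)
qed

lemma SS_lower: assumes "\<theta> > 0" shows "\<theta> * ln (1 + real n / \<theta>) \<le> SS \<theta> n"
  using harm_lower[OF assms, of n] assms unfolding SS_eq[OF assms] ln_one_plus[OF assms]
  by (simp add: mult_left_mono)

lemma SS_upper: assumes "\<theta> > 0" shows "SS \<theta> n \<le> 1 + \<theta> * ln (1 + real n / \<theta>)"
proof (cases n)
  case 0 then show ?thesis using assms by (simp add: SS_def)
next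
  case (Suc m)
  have "ln (\<theta> + real m) \<le> ln (\<theta> + real n)" using Suc assms by (simp add: add_pos_nonneg)
  then have "(\<Sum>i<n. 1 / (\<theta> + real i)) \<le> 1/\<theta> + (ln (\<theta> + real n) - ln \<theta>)"
    using harm_upper[OF assms, of m] Suc by simp
  then have "\<theta> * (\<Sum>i<n. 1 / (\<theta> + real i)) \<le> \<theta> * (1/\<theta> + (ln (\<theta> + real n) - ln \<theta>))"
    using assms by (simp add: mult_left_mono)
  then show ?thesis unfolding SS_eq[OF assms] ln_one_plus[OF assms] using assms
    by (simp add: distrib_left)
qed

lemma sqh_step: fixes x :: real assumes "x \<ge> 1" shows "1 / x^2 \<le> 2/x - 2/(x + 1)"
proof -
  have x: "x > 0" using assms by simp
  have "2/x - 2/(x+1) = 2 / (x * (x+1))" using x by (simp add: field_simps)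
  moreover have "1 / x^2 \<le> 2 / (x * (x+1))" using x assms
    by (simp add: power2_eq_square divide_simps) 
  ultimately show ?thesis by simp
qed

lemma sq_harm: assumes "\<theta> \<ge> 1"
  shows "(\<Sum>i<n. 1 / (\<theta> + real i)^2) \<le> 2/\<theta> - 2/(\<theta> + real n)"
proof (induction n)
  case 0 then show ?case by simp
next
  case (Suc m)
  have p: "\<theta> + real m \<ge> 1" using assms by simp
  have st: "1 / (\<theta> + real m)^2 \<le> 2/(\<theta> + real m) - 2/(\<theta> + real m + 1)"
    using p by (rule sqh_step)
  have e: "\<theta> + real (Suc m) = \<theta> + real m + 1" by simp
  show ?case unfolding sum.lessThan_Suc e using Suc.IH st by linarith
qed

lemma QQ_upper: assumes "\<theta> \<ge> 1" shows "QQ \<theta> n \<le> 2 * \<theta>"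
proof -
  have t: "\<theta> > 0" using assms by simp
  have "QQ \<theta> n = \<theta>^2 * (\<Sum>i<n. 1 / (\<theta> + real i)^2)"
    unfolding QQ_def by (simp add: sum_distrib_left power_divide)
  also have "\<dots> \<le> \<theta>^2 * (2/\<theta>)"
  proof (rule mult_left_mono)
    have "2/(\<theta> + real n) \<ge> 0" using t by simp
    then show "(\<Sum>i<n. 1 / (\<theta> + real i)^2) \<le> 2/\<theta>" using sq_harm[OF assms, of n] by linarith
  qed simp
  also have "\<dots> = 2 * \<theta>" using t by (simp add: power2_eq_square)
  finally show ?thesis .
qed




locale ldp =
  fixes n :: "real \<Rightarrow> nat"
  assumes npos: "\<forall>\<theta>. n \<theta> > 0"
    and nlim: "filterlim n at_top at_top"
    and rlim: "((\<lambda>\<theta>. \<theta> / real (n \<theta>)) \<longlongrightarrow> 0) at_top"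

context ldp
begin

definition LL :: "real \<Rightarrow> real" where "LL \<theta> = ln (real (n \<theta>) / \<theta>)"
definition aa :: "real \<Rightarrow> real" where "aa \<theta> = \<theta> * ln (real (n \<theta>) / \<theta>)"

lemma aa_LL: "aa \<theta> = \<theta> * LL \<theta>" unfolding aa_def LL_def by simp

lemma ev_ge1: "eventually (\<lambda>\<theta>::real. \<theta> \<ge> 1) at_top"
  by (rule eventually_ge_at_top)

lemma LL_lim: "filterlim LL at_top at_top"
proof -
  have ev: "eventually (\<lambda>\<theta>. \<theta> / real (n \<theta>) > 0) at_top"
    using eventually_gt_at_top[of "0::real"] by eventually_elim (use npos in simp)
  have u: "filterlim (\<lambda>\<theta>. \<theta> / real (n \<theta>)) (at_right 0) at_top"
    by (rule tendsto_imp_filterlim_at_right[OF rlim ev])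
  have "filterlim (\<lambda>\<theta>. ln (inverse (\<theta> / real (n \<theta>)))) at_top at_top"
    by (rule filterlim_compose[OF ln_at_top filterlim_compose[OF filterlim_inverse_at_top_right u]])
  then show ?thesis unfolding LL_def by (simp add: inverse_divide)
qed

lemma ev_LL: "eventually (\<lambda>\<theta>. LL \<theta> \<ge> 1) at_top"
  using LL_lim unfolding filterlim_at_top by blast

lemma ev_good: "eventually (\<lambda>\<theta>. \<theta> \<ge> 1 \<and> LL \<theta> \<ge> 1 \<and> aa \<theta> \<ge> \<theta> \<and> aa \<theta> > 0) at_top"
  using ev_ge1 ev_LL
proof eventually_elim
  case (elim \<theta>)
  then have "\<theta> * 1 \<le> \<theta> * LL \<theta>" by (intro mult_left_mono) auto
  then show ?case using elim by (simp add: aa_LL)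
qed

lemma aa_lim: "filterlim aa at_top at_top"
  by (rule filterlim_at_top_mono[OF filterlim_ident]) (use ev_good in \<open>eventually_elim, auto\<close>)

lemma inv_aa: "((\<lambda>\<theta>. 1 / aa \<theta>) \<longlongrightarrow> 0) at_top"
  using tendsto_inverse_0_at_top[OF aa_lim] by (simp add: divide_inverse)

lemma inv_LL: "((\<lambda>\<theta>. 1 / LL \<theta>) \<longlongrightarrow> 0) at_top"
  using tendsto_inverse_0_at_top[OF LL_lim] by (simp add: divide_inverse)

lemma SS_lim: assumes c: "c > 0"
  shows "((\<lambda>\<theta>. SS (c*\<theta>) (n \<theta>) / aa \<theta>) \<longlongrightarrow> c) at_top"
proof -
  define g where "g \<theta> = c + c * (ln (c * (\<theta> / real (n \<theta>)) + 1) - ln c) * (1 / LL \<theta>)" for \<theta>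
  have gl: "(g \<longlongrightarrow> c + c * (ln (c * 0 + 1) - ln c) * 0) at_top"
    unfolding g_def by (intro tendsto_intros rlim inv_LL) simp
  then have gl: "(g \<longlongrightarrow> c) at_top" by simp
  have gl2: "((\<lambda>\<theta>. g \<theta> + 1 / aa \<theta>) \<longlongrightarrow> c + 0) at_top"
    by (intro tendsto_add gl inv_aa)
  have key: "eventually (\<lambda>\<theta>. c * \<theta> * ln (1 + real (n \<theta>) / (c * \<theta>)) / aa \<theta> = g \<theta>) at_top"
    using ev_good
  proof eventually_elim
    case (elim \<theta>)
    have t: "\<theta> > 0" and np: "real (n \<theta>) > 0" using elim npos by auto
    have L: "LL \<theta> > 0" using elim by simp
    have e1: "1 + real (n \<theta>) / (c * \<theta>) = (c * (\<theta> / real (n \<theta>)) + 1) * (real (n \<theta>) / \<theta>) / c"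
      using t np c by (simp add: field_simps)
    have eqn: "ln (1 + real (n \<theta>) / (c * \<theta>)) = ln (c * (\<theta> / real (n \<theta>)) + 1) + LL \<theta> - ln c"
    proof -
      have pp: "c * (\<theta> / real (n \<theta>)) + 1 > 0" using t np c by (simp add: add_pos_pos)
      have "ln ((c * (\<theta> / real (n \<theta>)) + 1) * (real (n \<theta>) / \<theta>) / c)
         = ln (c * (\<theta> / real (n \<theta>)) + 1) + ln (real (n \<theta>) / \<theta>) - ln c"
        using pp t np c by (simp add: ln_div ln_mult del: of_nat_0_less_iff)
      then show ?thesis unfolding e1 LL_def .
    qed
    show ?case unfolding g_def aa_LL eqn using t L c by (simp add: field_simps)
  qed
  have lo: "eventually (\<lambda>\<theta>. g \<theta> \<le> SS (c*\<theta>) (n \<theta>) / aa \<theta>) at_top"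
    using key ev_good
  proof eventually_elim
    case (elim \<theta>)
    have "c * \<theta> * ln (1 + real (n \<theta>) / (c * \<theta>)) \<le> SS (c*\<theta>) (n \<theta>)"
      using elim c by (intro SS_lower) simp
    then have "c * \<theta> * ln (1 + real (n \<theta>) / (c * \<theta>)) / aa \<theta> \<le> SS (c*\<theta>) (n \<theta>) / aa \<theta>"
      using elim by (intro divide_right_mono) auto
    then show ?case using elim by simp
  qed
  have hi: "eventually (\<lambda>\<theta>. SS (c*\<theta>) (n \<theta>) / aa \<theta> \<le> g \<theta> + 1 / aa \<theta>) at_top"
    using key ev_good
  proof eventually_elim
    case (elim \<theta>)
    have "SS (c*\<theta>) (n \<theta>) \<le> 1 + c * \<theta> * ln (1 + real (n \<theta>) / (c * \<theta>))"
      using elim c by (intro SS_upper) simp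
    then have "SS (c*\<theta>) (n \<theta>) / aa \<theta> \<le> (1 + c * \<theta> * ln (1 + real (n \<theta>) / (c * \<theta>))) / aa \<theta>"
      using elim by (intro divide_right_mono) auto
    then show ?case using elim by (simp add: add_divide_distrib)
  qed
  show ?thesis using tendsto_sandwich[OF lo hi gl] gl2 by simp
qed

lemma SS1_lim: "((\<lambda>\<theta>. SS \<theta> (n \<theta>) / aa \<theta>) \<longlongrightarrow> 1) at_top"
  using SS_lim[of 1] by simp

lemma QQ_lim: "((\<lambda>\<theta>. QQ \<theta> (n \<theta>) / aa \<theta>) \<longlongrightarrow> 0) at_top"
proof -
  have lo: "eventually (\<lambda>\<theta>. 0 \<le> QQ \<theta> (n \<theta>) / aa \<theta>) at_top"
    using ev_good by eventually_elim (auto simp: QQ_def intro!: divide_nonneg_pos sum_nonneg)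
  have hi: "eventually (\<lambda>\<theta>. QQ \<theta> (n \<theta>) / aa \<theta> \<le> 2 * (1 / LL \<theta>)) at_top"
    using ev_good
  proof eventually_elim
    case (elim \<theta>)
    have "QQ \<theta> (n \<theta>) / aa \<theta> \<le> (2 * \<theta>) / aa \<theta>"
      using elim QQ_upper[of \<theta> "n \<theta>"] by (intro divide_right_mono) auto
    also have "\<dots> = 2 * (1 / LL \<theta>)" using elim by (simp add: aa_LL)
    finally show ?case .
  qed
  have "((\<lambda>\<theta>. 2 * (1 / LL \<theta>)) \<longlongrightarrow> 2 * 0) at_top" by (intro tendsto_intros inv_LL)
  then show ?thesis using tendsto_sandwich[OF lo hi] by simp
qed

end



lemma rateI_eq: "rateI x = x * ln x - x + 1" unfolding rateI_def by simp

context ldp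
begin

lemma exp_bound_lemma: assumes "(h \<longlongrightarrow> l) at_top" "l < -b"
  shows "eventually (\<lambda>\<theta>. exp (aa \<theta> * h \<theta>) \<le> exp (- b * aa \<theta>)) at_top"
  using order_tendstoD(2)[OF assms] ev_good
proof eventually_elim
  case (elim \<theta>)
  then have "aa \<theta> * h \<theta> \<le> aa \<theta> * (-b)" by (intro mult_left_mono) auto
  then show ?case by (simp add: mult.commute)
qed

lemma UB_piece:
  assumes x: "x > 0" and A: "\<forall>y\<in>A. ln x * (y - x) \<ge> 0" and b: "b < rateI x"
  shows "eventually (\<lambda>\<theta>. Kscaled_prob \<theta> (n \<theta>) (aa \<theta>) A \<le> exp (- b * aa \<theta>)) at_top"
proof -
  define h where "h \<theta> = (x - 1) * (SS \<theta> (n \<theta>) / aa \<theta>) - x * ln x" for \<theta>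
  have hl: "(h \<longlongrightarrow> (x-1)*1 - x*ln x) at_top" unfolding h_def by (intro tendsto_intros SS1_lim)
  have l: "(x-1)*1 - x*ln x < -b" using b by (simp add: rateI_eq)
  show ?thesis using exp_bound_lemma[OF hl l] ev_good
  proof eventually_elim
    case (elim \<theta>)
    have "Kscaled_prob \<theta> (n \<theta>) (aa \<theta>) A \<le> exp ((x-1) * SS \<theta> (n \<theta>) - ln x * x * aa \<theta>)"
      using elim x A npos by (intro chernoff) auto
    also have "(x-1) * SS \<theta> (n \<theta>) - ln x * x * aa \<theta> = aa \<theta> * h \<theta>"
      using elim by (simp add: h_def field_simps)
    finally show ?case using elim(1) by (rule order.trans)
  qed
qed

lemma P_zero: assumes "aa \<theta> > 0" "\<forall>y\<in>A. y \<le> 0" shows "Kscaled_prob \<theta> (n \<theta>) (aa \<theta>) A = 0"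
proof -
  have "{k\<in>{1..n \<theta>}. real k / aa \<theta> \<in> A} = {}"
  proof safe
    fix k assume "k \<in> {1..n \<theta>}" "real k / aa \<theta> \<in> A"
    moreover have "real k / aa \<theta> > 0" using assms(1) \<open>k \<in> {1..n \<theta>}\<close> by simp
    ultimately show "k \<in> {}" using assms(2) by force
  qed
  then show ?thesis unfolding Kscaled_prob_def by (metis sum.empty)
qed

lemma piece_hi: assumes F: "closed F" and b: "0 \<le> b" "b < b'" and I: "\<forall>x\<in>F. b' < rateI x"
  shows "eventually (\<lambda>\<theta>. Kscaled_prob \<theta> (n \<theta>) (aa \<theta>) (F \<inter> {1..}) \<le> exp (- b * aa \<theta>)) at_top"
proof (cases "F \<inter> {1..} = {}")
  case True then show ?thesis by (simp add: Kscaled_empty)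
next
  case False
  define x2 where "x2 = Inf (F \<inter> {1..})"
  have cl: "closed (F \<inter> {1..})" using F by (intro closed_Int) auto
  have bdd: "bdd_below (F \<inter> {1..})" by (auto intro: bdd_belowI[of _ 1])
  have x2in: "x2 \<in> F \<inter> {1..}" unfolding x2_def by (rule closed_contains_Inf[OF False bdd cl])
  have low: "\<forall>y\<in>F \<inter> {1..}. x2 \<le> y" unfolding x2_def using bdd by (auto intro: cInf_lower)
  have x1: "x2 \<ge> 1" using x2in by auto
  then have lx: "ln x2 \<ge> 0" by simp
  have "rateI x2 > b" using I x2in b by force
  moreover have "\<forall>y\<in>F \<inter> {1..}. ln x2 * (y - x2) \<ge> 0" using low lx by auto
  ultimately show ?thesis using x1 by (intro UB_piece) auto
qed

lemma piece_lo: assumes F: "closed F" "F \<subseteq> {0..}" and b: "0 \<le> b" "b < b'" and I: "\<forall>x\<in>F. b' < rateI x"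
  shows "eventually (\<lambda>\<theta>. Kscaled_prob \<theta> (n \<theta>) (aa \<theta>) (F \<inter> {..1}) \<le> exp (- b * aa \<theta>)) at_top"
proof (cases "F \<inter> {..1} = {}")
  case True then show ?thesis by (simp add: Kscaled_empty)
next
  case False
  define x1 where "x1 = Sup (F \<inter> {..1})"
  have cl: "closed (F \<inter> {..1})" using F by (intro closed_Int) auto
  have bdd: "bdd_above (F \<inter> {..1})" by (auto intro: bdd_aboveI[of _ 1])
  have x1in: "x1 \<in> F \<inter> {..1}" unfolding x1_def by (rule closed_contains_Sup[OF False bdd cl])
  have up: "\<forall>y\<in>F \<inter> {..1}. y \<le> x1" unfolding x1_def using bdd by (auto intro: cSup_upper)
  have x0: "x1 \<ge> 0" "x1 \<le> 1" using x1in F by auto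
  show ?thesis
  proof (cases "x1 = 0")
    case True
    show ?thesis using ev_good
    proof eventually_elim
      case (elim \<theta>)
      then have "Kscaled_prob \<theta> (n \<theta>) (aa \<theta>) (F \<inter> {..1}) = 0" using up True by (intro P_zero) auto
      then show ?case by simp
    qed
  next
    case False
    then have xp: "x1 > 0" using x0 by simp
    then have lx: "ln x1 \<le> 0" using x0 by simp
    have "rateI x1 > b" using I x1in b by force
    moreover have "\<forall>y\<in>F \<inter> {..1}. ln x1 * (y - x1) \<ge> 0" using up lx by (auto intro: mult_nonpos_nonpos)
    ultimately show ?thesis using xp by (intro UB_piece) auto
  qed
qed

lemma upper_bound:
  assumes F: "closedin (top_of_set {0..}) F"
  shows "Limsup at_top (\<lambda>\<theta>. nlog (aa \<theta>) (Kscaled_prob \<theta> (n \<theta>) (aa \<theta>) F)) \<le> - (INF x\<in>F. ereal (rateI x))"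
  unfolding Limsup_le_iff
proof (intro allI impI)
  fix y :: ereal assume y: "y > - (INF x\<in>F. ereal (rateI x))"
  have Fc: "closed F" using closedin_closed_trans[OF F] by simp
  have F0: "F \<subseteq> {0..}" using closedin_imp_subset[OF F] by simp
  show "eventually (\<lambda>\<theta>. y > nlog (aa \<theta>) (Kscaled_prob \<theta> (n \<theta>) (aa \<theta>) F)) at_top"
  proof (cases y)
    case PInf
    then show ?thesis by (simp add: nlog_def)
  next
    case MInf then show ?thesis using y by simp
  next
    case (real r)
    show ?thesis
    proof (cases "r > 0")
      case True
      show ?thesis using ev_good
      proof eventually_elim
        case (elim \<theta>)
        have "Kscaled_prob \<theta> (n \<theta>) (aa \<theta>) F \<le> 1" using elim npos by (intro Kscaled_le1) auto
        then have "ln (Kscaled_prob \<theta> (n \<theta>) (aa \<theta>) F) / aa \<theta> \<le> 0" if "Kscaled_prob \<theta> (n \<theta>) (aa \<theta>) F > 0"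
          using elim that by (intro divide_nonpos_pos) auto
        then show ?case using True elim real by (auto simp: nlog_def)
      qed
    next
      case False
      define b where "b = -r"
      have b0: "b \<ge> 0" using False b_def by simp
      have "ereal b < (INF x\<in>F. ereal (rateI x))" using y real b_def
        by (simp add: ereal_uminus_less_reorder)
      then obtain z where z: "ereal b < z" "z < (INF x\<in>F. ereal (rateI x))" using dense by blast
      then obtain b' where b': "z = ereal b'" by (cases z) auto
      have bb: "b < b'" using z b' by simp
      have I: "\<forall>x\<in>F. b' < rateI x"
      proof
        fix x assume "x \<in> F"
        then have "(INF x\<in>F. ereal (rateI x)) \<le> ereal (rateI x)" by (rule INF_lower)
        then have "ereal b' < ereal (rateI x)" using z(2) b' order_less_le_trans by metis
        then show "b' < rateI x" by simp
      qed
      define b'' where "b'' = (b + b') / 2"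
      have b''1: "0 \<le> b''" "b'' < b'" "b < b''" using b0 bb b''_def by auto
      note e1 = piece_hi[OF Fc b''1(1,2) I]
      note e2 = piece_lo[OF Fc F0 b''1(1,2) I]
      have "((\<lambda>\<theta>. ln 2 * (1 / aa \<theta>)) \<longlongrightarrow> ln 2 * 0) at_top" by (intro tendsto_intros inv_aa)
      then have e3: "eventually (\<lambda>\<theta>. ln 2 * (1 / aa \<theta>) < b'' - b) at_top"
        using b''1 by (intro order_tendstoD(2)) auto
      show ?thesis using e1 e2 e3 ev_good
      proof eventually_elim
        case (elim \<theta>)
        let ?P = "Kscaled_prob \<theta> (n \<theta>) (aa \<theta>) F"
        have "F = (F \<inter> {1..}) \<union> (F \<inter> {..1})" by auto
        then have "?P \<le> Kscaled_prob \<theta> (n \<theta>) (aa \<theta>) (F \<inter> {1..}) + Kscaled_prob \<theta> (n \<theta>) (aa \<theta>) (F \<inter> {..1})"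
          using Kscaled_Un[of \<theta> "n \<theta>" "aa \<theta>" "F \<inter> {1..}" "F \<inter> {..1}"] elim by simp
        then have Pb: "?P \<le> 2 * exp (- b'' * aa \<theta>)" using elim by simp
        show ?case
        proof (cases "?P \<le> 0")
          case True then show ?thesis by (simp add: nlog_def real)
        next
          case False
          then have "ln ?P \<le> ln (2 * exp (- b'' * aa \<theta>))" using Pb by (subst ln_le_cancel_iff) auto
          also have "\<dots> = ln 2 - b'' * aa \<theta>" by (simp add: ln_mult)
          finally have "ln ?P / aa \<theta> \<le> (ln 2 - b'' * aa \<theta>) / aa \<theta>" using elim by (intro divide_right_mono) auto
          also have "\<dots> = ln 2 * (1 / aa \<theta>) - b''" using elim by (simp add: field_simps)
          finally have "ln ?P / aa \<theta> < r" using elim b_def by linarith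
          then show ?thesis using False real by (simp add: nlog_def)
        qed
      qed
    qed
  qed
qed

end



lemma exp_neg_bound: fixes t :: real assumes t: "0 \<le> t" shows "exp (-t) \<le> 1 - t + t^2"
proof -
  have "1 + t \<le> exp t" by (rule exp_ge_add_one_self)
  then have "exp (-t) \<le> 1/(1+t)" using t by (simp add: exp_minus divide_simps)
  also have "1/(1+t) \<le> 1 - t + t^2"
  proof -
    have "(1 - t + t^2) * (1+t) = 1 + t^3" by (simp add: algebra_simps power2_eq_square power3_eq_cube)
    moreover have "t^3 \<ge> 0" using t by simp
    ultimately show ?thesis using t by (simp add: divide_simps)
  qed
  finally show ?thesis .
qed

context ldp
begin

lemma quarter_lemma: assumes "(h \<longlongrightarrow> l) at_top" "l < 0"
  shows "eventually (\<lambda>\<theta>. exp (aa \<theta> * h \<theta>) \<le> 1/4) at_top"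
proof -
  have e1: "eventually (\<lambda>\<theta>. h \<theta> < l/2) at_top" using assms by (intro order_tendstoD(2)[OF assms(1)]) auto
  have e2: "eventually (\<lambda>\<theta>. aa \<theta> \<ge> 2 * ln 4 / (-l)) at_top" using aa_lim unfolding filterlim_at_top by blast
  show ?thesis using e1 e2 ev_good
  proof eventually_elim
    case (elim \<theta>)
    have "aa \<theta> * h \<theta> \<le> aa \<theta> * (l/2)" using elim by (intro mult_left_mono) auto
    also have "\<dots> \<le> - ln 4"
    proof -
      have "2 * ln 4 \<le> aa \<theta> * (-l)" using elim assms(2) by (simp add: divide_simps mult.commute)
      then show ?thesis by simp
    qed
    finally have "exp (aa \<theta> * h \<theta>) \<le> exp (- ln 4)" by simp
    also have "\<dots> = 1/4" by (simp add: exp_minus)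
    finally show ?case .
  qed
qed

lemma tilted_half: assumes x: "x > 0" and d: "\<delta> > 0"
  shows "eventually (\<lambda>\<theta>. Kscaled_prob (x*\<theta>) (n \<theta>) (aa \<theta>) {x-\<delta><..<x+\<delta>} \<ge> 1/2) at_top"
proof -
  define t where "t = min 1 (\<delta>/(2*x))"
  have t: "0 < t" "t \<le> 1" using x d by (auto simp: t_def)
  have xt: "x*t \<le> \<delta>/2"
  proof -
    have "x * t \<le> x * (\<delta>/(2*x))" using x unfolding t_def by (intro mult_left_mono) auto
    then show ?thesis using x by simp
  qed
  define h1 where "h1 \<theta> = (exp t - 1) * (SS (x*\<theta>) (n \<theta>) / aa \<theta>) - t*(x+\<delta>)" for \<theta>
  have h1l: "(h1 \<longlongrightarrow> (exp t - 1) * x - t*(x+\<delta>)) at_top"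
    unfolding h1_def by (intro tendsto_intros SS_lim x)
  have l1: "(exp t - 1) * x - t*(x+\<delta>) < 0"
  proof -
    have "exp t - 1 \<le> t + t^2" using exp_bound[of t] t by simp
    then have "(exp t - 1) * x \<le> (t + t^2) * x" using x by (intro mult_right_mono) auto
    also have "\<dots> = t*x + t*(x*t)" by (simp add: algebra_simps power2_eq_square)
    also have "\<dots> \<le> t*x + t*(\<delta>/2)" using xt t by (intro add_left_mono mult_left_mono) auto
    finally have "(exp t - 1) * x \<le> t*x + t*(\<delta>/2)" .
    moreover have "t*(x+\<delta>) = t*x + t*\<delta>" "t*(\<delta>/2) = (t*\<delta>)/2" by (simp_all add: algebra_simps)
    moreover have "t*\<delta> > 0" using t d by simp
    ultimately show ?thesis by linarith
  qed
  define h2 where "h2 \<theta> = (exp (-t) - 1) * (SS (x*\<theta>) (n \<theta>) / aa \<theta>) + t*(x-\<delta>)" for \<theta>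
  have h2l: "(h2 \<longlongrightarrow> (exp (-t) - 1) * x + t*(x-\<delta>)) at_top"
    unfolding h2_def by (intro tendsto_intros SS_lim x)
  have l2: "(exp (-t) - 1) * x + t*(x-\<delta>) < 0"
  proof -
    have "exp (-t) - 1 \<le> -t + t^2" using exp_neg_bound[of t] t by simp
    then have "(exp (-t) - 1) * x \<le> (-t + t^2) * x" using x by (intro mult_right_mono) auto
    also have "\<dots> = -t*x + t*(x*t)" by (simp add: algebra_simps power2_eq_square)
    also have "\<dots> \<le> -t*x + t*(\<delta>/2)" using xt t by (intro add_left_mono mult_left_mono) auto
    finally have "(exp (-t) - 1) * x \<le> -t*x + t*(\<delta>/2)" .
    moreover have "t*(x-\<delta>) = t*x - t*\<delta>" "t*(\<delta>/2) = (t*\<delta>)/2" by (simp_all add: algebra_simps)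
    moreover have "t*\<delta> > 0" using t d by simp
    ultimately show ?thesis by linarith
  qed
  show ?thesis using quarter_lemma[OF h1l l1] quarter_lemma[OF h2l l2] ev_good
  proof eventually_elim
    case (elim \<theta>)
    have th: "x*\<theta> > 0" using elim x by simp
    have np: "n \<theta> > 0" using npos by simp
    have a: "aa \<theta> > 0" using elim by simp
    have "Kscaled_prob (x*\<theta>) (n \<theta>) (aa \<theta>) {x+\<delta>..} \<le> exp ((exp t - 1) * SS (x*\<theta>) (n \<theta>) - ln (exp t) * (x+\<delta>) * aa \<theta>)"
      using t by (intro chernoff th np a) auto
    also have "(exp t - 1) * SS (x*\<theta>) (n \<theta>) - ln (exp t) * (x+\<delta>) * aa \<theta> = aa \<theta> * h1 \<theta>"
      using a by (simp add: h1_def field_simps)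
    finally have P1: "Kscaled_prob (x*\<theta>) (n \<theta>) (aa \<theta>) {x+\<delta>..} \<le> 1/4" using elim(1) by simp
    have "Kscaled_prob (x*\<theta>) (n \<theta>) (aa \<theta>) {..x-\<delta>} \<le> exp ((exp (-t) - 1) * SS (x*\<theta>) (n \<theta>) - ln (exp (-t)) * (x-\<delta>) * aa \<theta>)"
      using t by (intro chernoff th np a) (auto intro: mult_nonneg_nonpos)
    also have "(exp (-t) - 1) * SS (x*\<theta>) (n \<theta>) - ln (exp (-t)) * (x-\<delta>) * aa \<theta> = aa \<theta> * h2 \<theta>"
      using a by (simp add: h2_def field_simps)
    finally have P2: "Kscaled_prob (x*\<theta>) (n \<theta>) (aa \<theta>) {..x-\<delta>} \<le> 1/4" using elim(2) by simp
    have U: "UNIV = ({x-\<delta><..<x+\<delta>} \<union> {x+\<delta>..}) \<union> {..x-\<delta>}" by auto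
    have "1 = Kscaled_prob (x*\<theta>) (n \<theta>) (aa \<theta>) UNIV" using th np by (simp add: Kscaled_UNIV)
    also have "\<dots> \<le> Kscaled_prob (x*\<theta>) (n \<theta>) (aa \<theta>) ({x-\<delta><..<x+\<delta>} \<union> {x+\<delta>..}) + Kscaled_prob (x*\<theta>) (n \<theta>) (aa \<theta>) {..x-\<delta>}"
      by (subst U, rule Kscaled_Un[OF th])
    also have "\<dots> \<le> Kscaled_prob (x*\<theta>) (n \<theta>) (aa \<theta>) {x-\<delta><..<x+\<delta>} + Kscaled_prob (x*\<theta>) (n \<theta>) (aa \<theta>) {x+\<delta>..} + Kscaled_prob (x*\<theta>) (n \<theta>) (aa \<theta>) {..x-\<delta>}"
      using Kscaled_Un[OF th] by simp
    finally show ?case using P1 P2 by simp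
  qed
qed

end



context ldp
begin

lemma LB_window: assumes x: "x > 0" and d: "\<delta> > 0" and e: "\<epsilon> > 0"
  shows "eventually (\<lambda>\<theta>. Kscaled_prob \<theta> (n \<theta>) (aa \<theta>) {x-\<delta><..<x+\<delta>} > 0 \<and>
          ln (Kscaled_prob \<theta> (n \<theta>) (aa \<theta>) {x-\<delta><..<x+\<delta>}) / aa \<theta> > - rateI x - \<delta> * \<bar>ln x\<bar> - \<epsilon>) at_top"
proof -
  define C where "C = (x-1)^2 / min 1 x"
  define g where "g \<theta> = - ln 2 * (1/aa \<theta>) - x * ln x - \<delta>*\<bar>ln x\<bar> + (x-1) * (SS \<theta> (n \<theta>)/aa \<theta>) - C * (QQ \<theta> (n \<theta>)/aa \<theta>)" for \<theta>
  have gl: "(g \<longlongrightarrow> - ln 2 * 0 - x*ln x - \<delta>*\<bar>ln x\<bar> + (x-1)*1 - C*0) at_top"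
    unfolding g_def by (intro tendsto_intros inv_aa SS1_lim QQ_lim)
  have "- ln 2 * 0 - x*ln x - \<delta>*\<bar>ln x\<bar> + (x-1)*1 - C*0 = - rateI x - \<delta>*\<bar>ln x\<bar>" by (simp add: rateI_eq)
  then have eg: "eventually (\<lambda>\<theta>. g \<theta> > - rateI x - \<delta>*\<bar>ln x\<bar> - \<epsilon>) at_top"
    using gl e by (intro order_tendstoD(1)) auto
  show ?thesis using eg tilted_half[OF x d] ev_good
  proof eventually_elim
    case (elim \<theta>)
    define W where "W = {x-\<delta><..<x+\<delta>}"
    define R where "R = pochhammer (x*\<theta>) (n \<theta>) / pochhammer \<theta> (n \<theta>)"
    define E where "E = exp (-(x*ln x + \<delta>*\<bar>ln x\<bar>) * aa \<theta>)"
    define P' where "P' = Kscaled_prob (x*\<theta>) (n \<theta>) (aa \<theta>) W"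
    have th: "\<theta> > 0" and a: "aa \<theta> > 0" using elim by auto
    have Rpos: "R > 0" unfolding R_def using th x by (intro divide_pos_pos poch_pos) auto
    have P'h: "P' \<ge> 1/2" using elim unfolding P'_def W_def by simp
    have tilt_sum: "P' * E * R \<le> Kscaled_prob \<theta> (n \<theta>) (aa \<theta>) W"
      unfolding P'_def Kscaled_prob_def sum_distrib_right
    proof (rule sum_mono)
      fix k assume k: "k \<in> {k\<in>{1..n \<theta>}. real k / aa \<theta> \<in> W}"
      have "\<bar>real k / aa \<theta> - x\<bar> < \<delta>" using k unfolding W_def by (auto simp: abs_less_iff)
      moreover have "real k - x * aa \<theta> = aa \<theta> * (real k / aa \<theta> - x)" using a by (simp add: field_simps)
      ultimately have kb: "\<bar>real k - x * aa \<theta>\<bar> \<le> aa \<theta> * \<delta>" using a by (simp add: abs_mult)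
      have "(real k - x * aa \<theta>) * ln x \<le> \<bar>real k - x * aa \<theta>\<bar> * \<bar>ln x\<bar>" by (metis abs_ge_self abs_mult)
      also have "\<dots> \<le> aa \<theta> * \<delta> * \<bar>ln x\<bar>" using kb by (intro mult_right_mono) auto
      finally have "-(x*ln x + \<delta>*\<bar>ln x\<bar>) * aa \<theta> \<le> - real k * ln x" by (simp add: algebra_simps)
      then have "E \<le> exp (- real k * ln x)" unfolding E_def by simp
      also have "exp (- real k * ln x) = (1/x)^k"
      proof -
        have "exp (- real k * ln x) = exp (real k * ln (1/x))" using x by (simp add: ln_div)
        also have "\<dots> = exp (ln (1/x)) ^ k" by (simp add: exp_of_nat_mult)
        also have "\<dots> = (1/x)^k" using x by simp
        finally show ?thesis .
      qed
      finally have Ek: "E \<le> (1/x)^k" .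
      have "Kprob (x*\<theta>) (n \<theta>) k * E * R \<le> Kprob (x*\<theta>) (n \<theta>) k * (1/x)^k * R"
        using Ek Rpos Kprob_nonneg[of "x*\<theta>" "n \<theta>" k] th x
        by (intro mult_right_mono mult_left_mono) auto
      also have "\<dots> = Kprob \<theta> (n \<theta>) k" using tilt[OF th x, of "n \<theta>" k] unfolding R_def by simp
      finally show "Kprob (x*\<theta>) (n \<theta>) k * E * R \<le> Kprob \<theta> (n \<theta>) k" .
    qed
    have Epos: "E > 0" unfolding E_def by simp
    have pp: "P' * E * R > 0" using P'h Epos Rpos by simp
    have Ppos: "Kscaled_prob \<theta> (n \<theta>) (aa \<theta>) W > 0" using pp tilt_sum by linarith
    have "ln (P' * E * R) \<le> ln (Kscaled_prob \<theta> (n \<theta>) (aa \<theta>) W)"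
      using pp tilt_sum by (subst ln_le_cancel_iff) auto
    moreover have "ln (P' * E * R) = ln P' + ln E + ln R" using P'h Epos Rpos by (simp add: ln_mult)
    moreover have "ln P' \<ge> - ln 2"
    proof -
      have "ln (1/2) \<le> ln P'" using P'h by (subst ln_le_cancel_iff) auto
      then show ?thesis by (simp add: ln_div)
    qed
    moreover have "ln E = -(x*ln x + \<delta>*\<bar>ln x\<bar>) * aa \<theta>" unfolding E_def by simp
    moreover have "ln R \<ge> (x-1) * SS \<theta> (n \<theta>) - C * QQ \<theta> (n \<theta>)"
      unfolding R_def C_def using ratio_lower[OF th x] by simp
    moreover have "aa \<theta> * g \<theta> = - ln 2 - (x*ln x + \<delta>*\<bar>ln x\<bar>) * aa \<theta> + ((x-1) * SS \<theta> (n \<theta>) - C * QQ \<theta> (n \<theta>))"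
      using a unfolding g_def by (simp add: field_simps)
    ultimately have "ln (Kscaled_prob \<theta> (n \<theta>) (aa \<theta>) W) \<ge> aa \<theta> * g \<theta>"
      by linarith
    then have "ln (Kscaled_prob \<theta> (n \<theta>) (aa \<theta>) W) / aa \<theta> \<ge> g \<theta>" using a by (simp add: field_simps)
    then show ?case using elim Ppos unfolding W_def by simp
  qed
qed

end



context ldp
begin

lemma LB_point: assumes G: "openin (top_of_set {0..}) G" and xG: "x \<in> G" and x: "x > 0" and e: "\<epsilon> > 0"
  shows "eventually (\<lambda>\<theta>. Kscaled_prob \<theta> (n \<theta>) (aa \<theta>) G > 0 \<and>
            ln (Kscaled_prob \<theta> (n \<theta>) (aa \<theta>) G) / aa \<theta> > - rateI x - \<epsilon>) at_top"
proof -
  obtain r where r: "r > 0" "\<forall>x'\<in>{0..}. dist x' x < r \<longrightarrow> x' \<in> G"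
    using G xG unfolding openin_euclidean_subtopology_iff by blast
  define \<delta> where "\<delta> = min (min r x / 2) (\<epsilon> / (2 * (\<bar>ln x\<bar> + 1)))"
  have d: "\<delta> > 0" "\<delta> < x" "\<delta> < r" using r x e by (auto simp: \<delta>_def)
  have dl: "\<delta> * \<bar>ln x\<bar> \<le> \<epsilon>/2"
  proof -
    have "\<delta> * \<bar>ln x\<bar> \<le> (\<epsilon> / (2 * (\<bar>ln x\<bar> + 1))) * \<bar>ln x\<bar>" unfolding \<delta>_def by (intro mult_right_mono) auto
    also have "\<dots> \<le> (\<epsilon> / (2 * (\<bar>ln x\<bar> + 1))) * (\<bar>ln x\<bar> + 1)" using e by (intro mult_left_mono) auto
    also have "\<dots> = \<epsilon>/2" by (simp add: field_simps)
    finally show ?thesis .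
  qed
  have WG: "{x-\<delta><..<x+\<delta>} \<subseteq> G"
  proof
    fix y assume y: "y \<in> {x-\<delta><..<x+\<delta>}"
    then have "y \<ge> 0" using d by auto
    moreover have "dist y x < r" using y d by (auto simp: dist_real_def abs_less_iff)
    ultimately show "y \<in> G" using r by auto
  qed
  have e2: "\<epsilon>/2 > 0" using e by simp
  show ?thesis using LB_window[OF x d(1) e2] ev_good
  proof eventually_elim
    case (elim \<theta>)
    have th: "\<theta> > 0" and a: "aa \<theta> > 0" using elim by auto
    have mono: "Kscaled_prob \<theta> (n \<theta>) (aa \<theta>) {x-\<delta><..<x+\<delta>} \<le> Kscaled_prob \<theta> (n \<theta>) (aa \<theta>) G"
      by (rule Kscaled_mono[OF th WG])
    have pos: "Kscaled_prob \<theta> (n \<theta>) (aa \<theta>) G > 0" using elim mono by linarith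
    have "ln (Kscaled_prob \<theta> (n \<theta>) (aa \<theta>) {x-\<delta><..<x+\<delta>}) \<le> ln (Kscaled_prob \<theta> (n \<theta>) (aa \<theta>) G)"
      using elim mono pos by (subst ln_le_cancel_iff) auto
    then have "ln (Kscaled_prob \<theta> (n \<theta>) (aa \<theta>) {x-\<delta><..<x+\<delta>}) / aa \<theta> \<le> ln (Kscaled_prob \<theta> (n \<theta>) (aa \<theta>) G) / aa \<theta>"
      using a by (intro divide_right_mono) auto
    then show ?case using elim pos dl by linarith
  qed
qed

lemma lower_bound:
  assumes G: "openin (top_of_set {0..}) G"
  shows "- (INF x\<in>G. ereal (rateI x)) \<le> Liminf at_top (\<lambda>\<theta>. nlog (aa \<theta>) (Kscaled_prob \<theta> (n \<theta>) (aa \<theta>) G))"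
proof -
  let ?L = "Liminf at_top (\<lambda>\<theta>. nlog (aa \<theta>) (Kscaled_prob \<theta> (n \<theta>) (aa \<theta>) G))"
  have pt: "- ereal (rateI x) \<le> ?L" if xG: "x \<in> G" and x: "x > 0" for x
    unfolding le_Liminf_iff
  proof (intro allI impI)
    fix y :: ereal assume y: "y < - ereal (rateI x)"
    obtain r where yr: "y \<le> ereal r" and rr: "r < - rateI x"
    proof (cases y)
      case (real r') then show ?thesis using that y by auto
    next
      case PInf then show ?thesis using y by simp
    next
      case MInf then show ?thesis using that[of "- rateI x - 1"] by simp
    qed
    have e: "- rateI x - r > 0" using rr by simp
    show "eventually (\<lambda>\<theta>. y < nlog (aa \<theta>) (Kscaled_prob \<theta> (n \<theta>) (aa \<theta>) G)) at_top"
      using LB_point[OF G xG x e]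
    proof eventually_elim
      case (elim \<theta>)
      then have "ereal r < nlog (aa \<theta>) (Kscaled_prob \<theta> (n \<theta>) (aa \<theta>) G)"
        by (simp add: nlog_def not_le)
      then show ?case by (rule le_less_trans[OF yr])
    qed
  qed
  have G0: "G \<subseteq> {0..}" using openin_imp_subset[OF G] by simp
  have pt0: "- ereal (rateI x) \<le> ?L" if xG: "x \<in> G" for x
  proof (cases "x > 0")
    case True then show ?thesis using pt xG by simp
  next
    case False
    then have x0: "x = 0" using G0 xG by force
    obtain r where r: "r > 0" "\<forall>x'\<in>{0..}. dist x' x < r \<longrightarrow> x' \<in> G"
      using G xG unfolding openin_euclidean_subtopology_iff by blast
    define y where "y = min (r/2) (1/2)"
    have y: "y > 0" "y \<le> 1" using r by (auto simp: y_def)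
    have yG: "y \<in> G" using r y x0 by (auto simp: y_def dist_real_def)
    have "y * ln y \<le> 0" using y by (intro mult_nonneg_nonpos) auto
    moreover have "rateI y = y * ln y - y + 1" by (rule rateI_eq)
    moreover have "rateI x = 1" using x0 by (simp add: rateI_def)
    ultimately have "rateI y \<le> rateI x" using y by linarith
    then have "- ereal (rateI x) \<le> - ereal (rateI y)" by simp
    also have "\<dots> \<le> ?L" using pt[OF yG y(1)] .
    finally show ?thesis .
  qed
  have "- ?L \<le> (INF x\<in>G. ereal (rateI x))"
    by (rule INF_greatest) (use pt0 in \<open>simp add: ereal_uminus_le_reorder\<close>)
  then show ?thesis by (simp add: ereal_uminus_le_reorder)
qed

end

lemma rateI_nonneg: assumes "x \<ge> 0" shows "rateI x \<ge> 0"
proof (cases "x = 0")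
  case True then show ?thesis by (simp add: rateI_def)
next
  case False
  then have x: "x > 0" using assms by simp
  have "ln (1/x) \<le> 1/x - 1" using x by (intro ln_le_minus_one) simp
  then have "- ln x \<le> 1/x - 1" using x by (simp add: ln_div)
  then have "x * (- ln x) \<le> x * (1/x - 1)" using x by (intro mult_left_mono) auto
  moreover have "x * (1/x - 1) = 1 - x" using x by (simp add: right_diff_distrib)
  ultimately have "- (x * ln x) \<le> 1 - x" by simp
  then have "0 \<le> x * ln x - x + 1" by linarith
  then show ?thesis by (simp add: rateI_eq)
qed

lemma rateI_cont: "continuous_on {0..} rateI"
proof -
  have cont: "continuous_on {0..} (\<lambda>x::real. x * ln x - x + 1)"
    unfolding continuous_on_eq_continuous_within
  proof
    fix x :: real assume x: "x \<in> {0..}"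
    show "continuous (at x within {0..}) (\<lambda>x. x * ln x - x + 1)"
    proof (cases "x = 0")
      case True
      have "((\<lambda>x::real. x * ln x - x + 1) \<longlongrightarrow> 1) (at_right 0)" by real_asymp
      then show ?thesis using True by (simp add: continuous_within at_within_Ici_at_right)
    next
      case False
      then have "x > 0" using x by simp
      then have c1: "isCont ln x" by (intro isCont_ln) simp
      have "isCont (\<lambda>x. x * ln x - x + 1) x"
        by (rule isCont_add[OF isCont_diff[OF isCont_mult[OF continuous_ident c1] continuous_ident] continuous_const])
      then show ?thesis by (rule continuous_at_imp_continuous_within)
    qed
  qed
  have eq: "rateI = (\<lambda>x::real. x * ln x - x + 1)" by (rule ext) (simp add: rateI_eq)
  show ?thesis unfolding eq by (rule cont)
qed

lemma rateI_closed: "closedin (top_of_set {0..}) {x\<in>{0..}. rateI x \<le> c}"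
proof -
  have "closed {x\<in>{0..}. rateI x \<le> c}"
    by (rule continuous_on_closed_Collect_le[OF rateI_cont continuous_on_const]) simp
  then show ?thesis by (intro closed_subset) auto
qed

theorem theorem4p5:
  fixes n :: "real \<Rightarrow> nat"
  assumes "\<forall>\<theta>. n \<theta> > 0"
    and "filterlim n at_top at_top"
    and "((\<lambda>\<theta>. \<theta> / real (n \<theta>)) \<longlongrightarrow> 0) at_top"
  shows "LDP_at_top
           (\<lambda>\<theta> A. Kscaled_prob \<theta> (n \<theta>) (\<theta> * ln (real (n \<theta>) / \<theta>)) A)
           (\<lambda>\<theta>. \<theta> * ln (real (n \<theta>) / \<theta>))
           rateI {0..}"
proof -
  interpret ldp n using assms by unfold_locales
  have aa: "\<And>\<theta>. \<theta> * ln (real (n \<theta>) / \<theta>) = aa \<theta>" by (simp add: aa_def)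
  show ?thesis unfolding LDP_at_top_def aa
  proof (intro conjI allI impI ballI)
    fix x :: real assume "x \<in> {0..}" then show "0 \<le> rateI x" by (intro rateI_nonneg) simp
  next
    fix c show "closedin (top_of_set {0..}) {x \<in> {0..}. rateI x \<le> c}" by (rule rateI_closed)
  next
    fix F :: "real set" assume "closedin (top_of_set {0..}) F"
    then show "Limsup at_top (\<lambda>\<theta>. nlog (aa \<theta>) (Kscaled_prob \<theta> (n \<theta>) (aa \<theta>) F)) \<le> - (INF x\<in>F. ereal (rateI x))"
      by (rule upper_bound)
  next
    fix G :: "real set" assume "openin (top_of_set {0..}) G"
    then show "- (INF x\<in>G. ereal (rateI x)) \<le> Liminf at_top (\<lambda>\<theta>. nlog (aa \<theta>) (Kscaled_prob \<theta> (n \<theta>) (aa \<theta>) G))"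
      by (rule lower_bound)
  qed
qed


end
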